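(* Let $\mathcal L$ be an algebraic system, $\mathbf{STop}\mathcal{L}$ the category of semitopological $\mathcal L$-structures, and $\mathcal C$ an epireflective subcategory of $\mathbf{Top}$. Then $\mathrm{r}_{\mathcal C}(\mathbf{STop}\mathcal{L})\subseteq\mathbf{STop}\mathcal{L}$: for each $(\mathfrak U,X)\in\mathbf{STop}\mathcal{L}$, where $X$ is the domain of $\mathfrak U$, the space $\mathrm{r}_{\mathcal C}X$ is the domain of an $\mathcal L$-structure $\mathfrak V$ with $(\mathfrak V,\mathrm{r}_{\mathcal C}X)\in\mathbf{STop}\mathcal{L}$. Furthermore, the reflection arrow $\mathrm{r}_{(X,\mathcal C)}\colon X\to\mathrm{r}_{\mathcal C}X$ is an $\mathcal L$-homomorphism in $\mathbf{STop}\mathcal{L}$.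
   Context: An epireflective subcategory $\mathcal C$ of $\mathbf{Top}$ is a full, isomorphism-closed subcategory closed under products and subspaces; each space $X$ has a reflection $\mathrm{r}_{\mathcal C}X\in\mathcal C$ with a continuous surjection $\mathrm{r}_{(X,\mathcal C)}\colon X\to \mathrm{r}_{\mathcal C}X$ through which every continuous map from $X$ into a space of $\mathcal C$ factors uniquely. An algebraic system $\mathcal L$ consists of constant symbols, function symbols of finite arity $\ge1$ and a set of equations; an $\mathcal L$-structure is a set with interpretations of the constants and operations satisfying the equations; a semitopological $\mathcal L$-structure is one on a topological space in which all operations are separately continuous (continuous in each variable with the others fixed); $\mathcal L$-homomorphisms are continuous maps preserving constants and operations. *)

theory Defs
  imports "HOL-Analysis.Analysis"
begin

datatype ('c, 'f) trm = Var nat | Const 'c | Fn 'f "('c, 'f) trm list"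

record ('c, 'f) alg_system =
  consts_of :: "'c set"
  funs_of :: "'f set"
  arity :: "'f \<Rightarrow> nat"
  eqns_of :: "(('c, 'f) trm \<times> ('c, 'f) trm) set"

fun wf_trm :: "('c, 'f) alg_system \<Rightarrow> ('c, 'f) trm \<Rightarrow> bool" where
  "wf_trm L (Var n) = True"
| "wf_trm L (Const c) = (c \<in> consts_of L)"
| "wf_trm L (Fn f ts) = (f \<in> funs_of L \<and> length ts = arity L f \<and> (\<forall>t\<in>set ts. wf_trm L t))"

definition algebraic_system :: "('c, 'f) alg_system \<Rightarrow> bool" where
  "algebraic_system L \<longleftrightarrow>
     (\<forall>f\<in>funs_of L. arity L f \<ge> 1) \<and>
     (\<forall>(l, r)\<in>eqns_of L. wf_trm L l \<and> wf_trm L r)"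

type_synonym ('c, 'f, 'a) L_interp = "('c \<Rightarrow> 'a) \<times> ('f \<Rightarrow> 'a list \<Rightarrow> 'a)"

fun eval_trm :: "('c, 'f, 'a) L_interp \<Rightarrow> (nat \<Rightarrow> 'a) \<Rightarrow> ('c, 'f) trm \<Rightarrow> 'a" where
  "eval_trm U \<rho> (Var n) = \<rho> n"
| "eval_trm U \<rho> (Const c) = fst U c"
| "eval_trm U \<rho> (Fn f ts) = snd U f (map (eval_trm U \<rho>) ts)"

definition L_structure :: "('c, 'f) alg_system \<Rightarrow> 'a set \<Rightarrow> ('c, 'f, 'a) L_interp \<Rightarrow> bool" where
  "L_structure L A U \<longleftrightarrow>
     (\<forall>c\<in>consts_of L. fst U c \<in> A) \<and>
     (\<forall>f\<in>funs_of L. \<forall>as. length as = arity L f \<and> set as \<subseteq> A \<longrightarrow> snd U f as \<in> A) \<and>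
     (\<forall>(l, r)\<in>eqns_of L. \<forall>\<rho>. range \<rho> \<subseteq> A \<longrightarrow> eval_trm U \<rho> l = eval_trm U \<rho> r)"

definition semitop_L_structure :: "('c, 'f) alg_system \<Rightarrow> 'a topology \<Rightarrow> ('c, 'f, 'a) L_interp \<Rightarrow> bool" where
  "semitop_L_structure L X U \<longleftrightarrow>
     L_structure L (topspace X) U \<and>
     (\<forall>f\<in>funs_of L. \<forall>as i. length as = arity L f \<and> set as \<subseteq> topspace X \<and> i < arity L f \<longrightarrow>
        continuous_map X X (\<lambda>x. snd U f (as[i := x])))"

definition L_hom :: "('c, 'f) alg_system \<Rightarrow> 'a topology \<Rightarrow> ('c, 'f, 'a) L_interp \<Rightarrow>
                     'b topology \<Rightarrow> ('c, 'f, 'b) L_interp \<Rightarrow> ('a \<Rightarrow> 'b) \<Rightarrow> bool" where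
  "L_hom L X U Y V h \<longleftrightarrow>
     continuous_map X Y h \<and>
     (\<forall>c\<in>consts_of L. h (fst U c) = fst V c) \<and>
     (\<forall>f\<in>funs_of L. \<forall>as. length as = arity L f \<and> set as \<subseteq> topspace X \<longrightarrow>
        h (snd U f as) = snd V f (map h as))"

text \<open>A class of topological spaces (on the carrier type 'b), full and isomorphism-closed,
  closed under subspaces and under products (products indexed by sets of the same
  type, represented up to homeomorphism in 'b).\<close>
definition epireflective_class :: "('b topology \<Rightarrow> bool) \<Rightarrow> bool" where
  "epireflective_class C \<longleftrightarrow>
     (\<forall>Y Z. C Y \<and> Y homeomorphic_space Z \<longrightarrow> C Z) \<and>
     (\<forall>Y S. C Y \<longrightarrow> C (subtopology Y S)) \<and>
     (\<forall>(I :: 'b set) (Y :: 'b \<Rightarrow> 'b topology) Z.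
        (\<forall>i\<in>I. C (Y i)) \<and> product_topology Y I homeomorphic_space Z \<longrightarrow> C Z)"

definition is_reflection :: "('b topology \<Rightarrow> bool) \<Rightarrow> 'a topology \<Rightarrow> 'b topology \<Rightarrow> ('a \<Rightarrow> 'b) \<Rightarrow> bool" where
  "is_reflection C X R r \<longleftrightarrow>
     C R \<and> continuous_map X R r \<and> r ` topspace X = topspace R \<and>
     (\<forall>Y g. C Y \<and> continuous_map X Y g \<longrightarrow>
        (\<exists>h. continuous_map R Y h \<and> (\<forall>x\<in>topspace X. h (r x) = g x)) \<and>
        (\<forall>h h'. continuous_map R Y h \<and> (\<forall>x\<in>topspace X. h (r x) = g x) \<and>
                continuous_map R Y h' \<and> (\<forall>x\<in>topspace X. h' (r x) = g x) \<longrightarrow>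
                (\<forall>y\<in>topspace R. h y = h' y)))"

end

theory Submission
  imports Defs
begin

lemma refl_ex:
  assumes "is_reflection C X R r" "C Y" "continuous_map X Y g"
  shows "\<exists>h. continuous_map R Y h \<and> (\<forall>x\<in>topspace X. h (r x) = g x)"
  using assms unfolding is_reflection_def by auto

lemma refl_basic:
  assumes "is_reflection C X R r"
  shows "C R" "continuous_map X R r" "r ` topspace X = topspace R"
  using assms unfolding is_reflection_def by blast+

lemma semi_cont:
  assumes "semitop_L_structure L X U" "f \<in> funs_of L" "length as = arity L f" "set as \<subseteq> topspace X" "i < arity L f"
  shows "continuous_map X X (\<lambda>x. snd U f (as[i := x]))"
  using assms unfolding semitop_L_structure_def by auto

lemma one_coord:
  assumes st: "semitop_L_structure L X U"
    and rf: "is_reflection C X R r"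
    and f: "f \<in> funs_of L" and len: "length cs = arity L f" and cs: "set cs \<subseteq> topspace X"
    and i: "i < arity L f" and x: "x \<in> topspace X" and y: "y \<in> topspace X" and rxy: "r x = r y"
  shows "r (snd U f (cs[i := x])) = r (snd U f (cs[i := y]))"
proof -
  have c1: "continuous_map X X (\<lambda>x. snd U f (cs[i := x]))"
    using semi_cont[OF st f len cs i] .
  have cr: "continuous_map X R r" and CR: "C R" using refl_basic[OF rf] by auto
  have "continuous_map X R (r \<circ> (\<lambda>x. snd U f (cs[i := x])))"
    using continuous_map_compose[OF c1 cr] .
  then obtain h where "\<forall>x\<in>topspace X. h (r x) = (r \<circ> (\<lambda>x. snd U f (cs[i := x]))) x"
    using refl_ex[OF rf CR] by blast
  then show ?thesis using x y rxy by (metis comp_apply)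
qed

lemma well_def:
  assumes st: "semitop_L_structure L X U"
    and rf: "is_reflection C X R r"
    and f: "f \<in> funs_of L" and la: "length as = arity L f" and lb: "length bs = arity L f"
    and as: "set as \<subseteq> topspace X" and bs: "set bs \<subseteq> topspace X"
    and eq: "map r as = map r bs"
  shows "r (snd U f as) = r (snd U f bs)"
proof -
  define n where "n = arity L f"
  define cs where "cs k = map (\<lambda>j. if j < k then bs!j else as!j) [0..<n]" for k
  have lcs: "length (cs k) = n" for k by (simp add: cs_def)
  have scs: "set (cs k) \<subseteq> topspace X" for k
  proof -
    have "\<forall>j<n. bs!j \<in> topspace X" "\<forall>j<n. as!j \<in> topspace X"
      using as bs la lb n_def by auto
    then show ?thesis unfolding cs_def by auto
  qed
  have "k \<le> n \<Longrightarrow> r (snd U f as) = r (snd U f (cs k))" for k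
  proof (induction k)
    case 0
    have "cs 0 = as" using la by (simp add: cs_def n_def list_eq_iff_nth_eq)
    then show ?case by simp
  next
    case (Suc k)
    have k: "k < n" using Suc by simp
    have e1: "cs (Suc k) = (cs k)[k := bs!k]" using k by (simp add: cs_def list_eq_iff_nth_eq nth_list_update)
    have e2: "cs k = (cs k)[k := as!k]" using k by (simp add: cs_def list_eq_iff_nth_eq nth_list_update)
    have ax: "as!k \<in> topspace X" using as k la n_def by auto
    have bx: "bs!k \<in> topspace X" using bs k lb n_def by auto
    have rr: "r (as!k) = r (bs!k)" using eq k la lb n_def by (metis nth_map)
    have "r (snd U f ((cs k)[k := as!k])) = r (snd U f ((cs k)[k := bs!k]))"
      by (rule one_coord[OF st rf f _ scs _ ax bx rr]) (use lcs k n_def in auto)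
    then show ?case using Suc e1 e2 by simp
  qed
  moreover have "cs n = bs" using lb by (simp add: cs_def n_def list_eq_iff_nth_eq)
  ultimately show ?thesis by (metis order_refl)
qed

theorem proposition3p9:
  fixes L :: "('c, 'f) alg_system"
    and C :: "'b topology \<Rightarrow> bool"
    and X :: "'a topology" and U :: "('c, 'f, 'a) L_interp"
    and R :: "'b topology" and r :: "'a \<Rightarrow> 'b"
  assumes alg: "algebraic_system L"
    and "epireflective_class C"
    and st: "semitop_L_structure L X U"
    and rf: "is_reflection C X R r"
  shows "\<exists>V :: ('c, 'f, 'b) L_interp. semitop_L_structure L R V \<and> L_hom L X U R V r"
proof -
  have cr: "continuous_map X R r" and sur: "r ` topspace X = topspace R" and CR: "C R"
    using refl_basic[OF rf] by auto
  define s where "s b = (SOME x. x \<in> topspace X \<and> r x = b)" for b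
  have s: "s b \<in> topspace X \<and> r (s b) = b" if "b \<in> topspace R" for b
  proof -
    have "\<exists>x. x \<in> topspace X \<and> r x = b" using that sur by (metis imageE)
    then show ?thesis unfolding s_def by (rule someI_ex)
  qed
  have rX: "x \<in> topspace X \<Longrightarrow> r x \<in> topspace R" for x using continuous_map_image_subset_topspace[OF cr] by blast
  have rsr: "x \<in> topspace X \<Longrightarrow> r (s (r x)) = r x" for x using s rX by blast
  have LS: "L_structure L (topspace X) U" using st unfolding semitop_L_structure_def by simp
  define V :: "('c, 'f, 'b) L_interp" where "V = ((\<lambda>c. r (fst U c)), (\<lambda>f bs. r (snd U f (map s bs))))"
  have WD: "\<And>f as bs. f \<in> funs_of L \<Longrightarrow> length as = arity L f \<Longrightarrow> length bs = arity L f \<Longrightarrow>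
     set as \<subseteq> topspace X \<Longrightarrow> set bs \<subseteq> topspace X \<Longrightarrow> map r as = map r bs \<Longrightarrow>
     r (snd U f as) = r (snd U f bs)"
    by (rule well_def[OF st rf])
  have opX: "\<And>f as. f \<in> funs_of L \<Longrightarrow> length as = arity L f \<Longrightarrow> set as \<subseteq> topspace X \<Longrightarrow> snd U f as \<in> topspace X"
    using LS unfolding L_structure_def by blast
  have hom: "L_hom L X U R V r"
    unfolding L_hom_def
  proof (intro conjI ballI allI impI)
    show "continuous_map X R r" by (rule cr)
    show "r (fst U c) = fst V c" for c by (simp add: V_def)
    fix f as assume f: "f \<in> funs_of L" and a: "length as = arity L f \<and> set as \<subseteq> topspace X"
    have ss: "set (map s (map r as)) \<subseteq> topspace X" using a s rX by auto
    have "map r (map s (map r as)) = map r as" using a rsr by (auto simp: map_eq_conv)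
    then have "r (snd U f (map s (map r as))) = r (snd U f as)"
      using WD[OF f _ _ ss] a by simp
    then show "r (snd U f as) = snd V f (map r as)" by (simp add: V_def)
  qed
  have EV: "wf_trm L t \<Longrightarrow> range \<rho> \<subseteq> topspace R \<Longrightarrow>
      eval_trm U (s \<circ> \<rho>) t \<in> topspace X \<and> eval_trm V \<rho> t = r (eval_trm U (s \<circ> \<rho>) t)" for t \<rho>
  proof (induction t)
    case (Var n)
    then have "\<rho> n \<in> topspace R" by auto
    then show ?case using s by simp
  next
    case (Const c)
    then show ?case using LS unfolding L_structure_def by (simp add: V_def)
  next
    case (Fn f ts)
    have f: "f \<in> funs_of L" and lt: "length ts = arity L f" and w: "\<forall>t\<in>set ts. wf_trm L t" using Fn by auto
    have IH: "\<forall>t\<in>set ts. eval_trm U (s \<circ> \<rho>) t \<in> topspace X \<and> eval_trm V \<rho> t = r (eval_trm U (s \<circ> \<rho>) t)"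
      using Fn w by blast
    let ?as = "map (eval_trm U (s \<circ> \<rho>)) ts"
    have asX: "set ?as \<subseteq> topspace X" using IH by auto
    have m1: "map (eval_trm V \<rho>) ts = map r ?as" using IH by auto
    have ss: "set (map s (map r ?as)) \<subseteq> topspace X" using asX s rX by auto
    have "map r (map s (map r ?as)) = map r ?as" using asX rsr by (auto simp: map_eq_conv)
    then have "r (snd U f (map s (map r ?as))) = r (snd U f ?as)"
      using WD[OF f _ _ ss asX] lt by simp
    then have q: "r (snd U f (map s (map r ?as))) = r (snd U f ?as)" .
    have "eval_trm V \<rho> (Fn f ts) = snd V f (map (eval_trm V \<rho>) ts)" by simp
    also have "\<dots> = snd V f (map r ?as)" using m1 by (rule arg_cong)
    also have "\<dots> = r (snd U f (map s (map r ?as)))" by (simp add: V_def)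
    also have "\<dots> = r (eval_trm U (s \<circ> \<rho>) (Fn f ts))" using q by simp
    finally show ?case using opX[OF f _ asX] lt by (simp add: comp_def)
  qed
  have EQ: "\<forall>(l, r)\<in>eqns_of L. \<forall>\<rho>. range \<rho> \<subseteq> topspace R \<longrightarrow> eval_trm V \<rho> l = eval_trm V \<rho> r"
  proof (clarify)
    fix l rr and \<rho> :: "nat \<Rightarrow> 'b" assume e: "(l, rr) \<in> eqns_of L" and rg: "range \<rho> \<subseteq> topspace R"
    have wl: "wf_trm L l" and wr: "wf_trm L rr" using alg e unfolding algebraic_system_def by auto
    have rs: "range (s \<circ> \<rho>) \<subseteq> topspace X" using rg s by auto
    have "eval_trm U (s \<circ> \<rho>) l = eval_trm U (s \<circ> \<rho>) rr"
      using LS e rs unfolding L_structure_def by auto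
    then show "eval_trm V \<rho> l = eval_trm V \<rho> rr"
      using EV[OF wl rg] EV[OF wr rg] by simp
  qed
  have C1: "\<forall>c\<in>consts_of L. fst V c \<in> topspace R"
    using LS rX unfolding L_structure_def V_def by auto
  have F1: "\<forall>f\<in>funs_of L. \<forall>bs. length bs = arity L f \<and> set bs \<subseteq> topspace R \<longrightarrow> snd V f bs \<in> topspace R"
  proof (intro ballI allI impI)
    fix f bs assume f: "f \<in> funs_of L" and a: "length bs = arity L f \<and> set bs \<subseteq> topspace R"
    have "set (map s bs) \<subseteq> topspace X" using a s by auto
    then have "snd U f (map s bs) \<in> topspace X" using opX[OF f] a by simp
    then show "snd V f bs \<in> topspace R" using rX by (simp add: V_def)
  qed
  have LSV: "L_structure L (topspace R) V"
    unfolding L_structure_def using EQ C1 F1 by blast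
  have SC: "continuous_map R R (\<lambda>y. snd V f (bs[i := y]))"
    if f: "f \<in> funs_of L" and a: "length bs = arity L f \<and> set bs \<subseteq> topspace R \<and> i < arity L f" for f bs i
  proof -
    have cs: "set (map s bs) \<subseteq> topspace X" using a s by auto
    have c1: "continuous_map X X (\<lambda>x. snd U f ((map s bs)[i := x]))"
      using semi_cont[OF st f _ cs] a by auto
    have "continuous_map X R (r \<circ> (\<lambda>x. snd U f ((map s bs)[i := x])))"
      using continuous_map_compose[OF c1 cr] .
    then obtain h where hc: "continuous_map R R h"
      and hh: "\<forall>x\<in>topspace X. h (r x) = (r \<circ> (\<lambda>x. snd U f ((map s bs)[i := x]))) x"
      using refl_ex[OF rf CR] by blast
    show ?thesis
    proof (rule continuous_map_eq[OF hc])
      fix y assume y: "y \<in> topspace R"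
      have "h y = h (r (s y))" using s y by simp
      also have "\<dots> = r (snd U f ((map s bs)[i := s y]))" using bspec[OF hh conjunct1[OF s[OF y]]] by simp
      also have "(map s bs)[i := s y] = map s (bs[i := y])" by (simp add: map_update)
      finally show "h y = snd V f (bs[i := y])" by (simp add: V_def)
    qed
  qed
  have "semitop_L_structure L R V"
    unfolding semitop_L_structure_def using LSV SC by blast
  then show ?thesis using hom by blast
qed

end
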